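(* For $1\le k\le n-1$ let $F(n,k)$ be the set of involutions $\omega$ of $[n]$ such that the word $\omega(1)\cdots\omega(n)$ contains $1\,2\,\cdots\,k$ as a subsequence (i.e. $1,\dots,k$ appear in increasing order) and the letter $k+1$ occurs before the letter $k$. Let $f(n,k)$ be the number of standard Young tableaux $T$ with $n$ cells (and more than one column) such that the entry of $T$ in row $1$, column $2$ is $k$. Then for $2\le k\le n$, $f(n,k)=|F(n,k-1)|$.
   Context: $[n]=\{1,\dots,n\}$; an involution is a permutation equal to its own inverse. A standard Young tableau with $n$ cells is a Ferrers diagram of a partition of $n$ filled bijectively with $1,\dots,n$, entries increasing along rows and down columns. *)

theory Defs
  imports "HOL-Combinatorics.Permutations"
begin

definition involution_on :: "nat \<Rightarrow> (nat \<Rightarrow> nat) \<Rightarrow> bool" where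
  "involution_on n w \<longleftrightarrow> w permutes {1..n} \<and> w \<circ> w = id"

text \<open>In the word w(1)...w(n), the letter j occurs at position inv w j.
  F(n,k): letters 1,...,k appear in increasing order, and letter k+1 occurs before letter k.\<close>
definition F_set :: "nat \<Rightarrow> nat \<Rightarrow> (nat \<Rightarrow> nat) set" where
  "F_set n k = {w. involution_on n w
      \<and> (\<forall>a b. 1 \<le> a \<and> a < b \<and> b \<le> k \<longrightarrow> inv w a < inv w b)
      \<and> inv w (k + 1) < inv w k}"

text \<open>Partitions as weakly decreasing lists of positive parts; cells 0-indexed (row, column).\<close>
definition is_partition :: "nat list \<Rightarrow> bool" where
  "is_partition lam \<longleftrightarrow> sorted_wrt (\<ge>) lam \<and> (\<forall>x\<in>set lam. 0 < x)"

definition cells :: "nat list \<Rightarrow> (nat \<times> nat) set" where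
  "cells lam = {(i, j). i < length lam \<and> j < lam ! i}"

definition syt :: "nat list \<Rightarrow> (nat \<times> nat \<Rightarrow> nat) \<Rightarrow> bool" where
  "syt lam T \<longleftrightarrow> is_partition lam
     \<and> bij_betw T (cells lam) {1..sum_list lam}
     \<and> (\<forall>c. c \<notin> cells lam \<longrightarrow> T c = 0)
     \<and> (\<forall>i j. (i, Suc j) \<in> cells lam \<longrightarrow> T (i, j) < T (i, Suc j))
     \<and> (\<forall>i j. (Suc i, j) \<in> cells lam \<longrightarrow> T (i, j) < T (Suc i, j))"

definition f_count :: "nat \<Rightarrow> nat \<Rightarrow> nat" where
  "f_count n k = card {T. \<exists>lam. syt lam T \<and> sum_list lam = n
       \<and> lam \<noteq> [] \<and> lam ! 0 > 1 \<and> T (0, 1) = k}"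

end

theory Submission
  imports Defs
begin


definition dc :: "(nat \<times> nat) set \<Rightarrow> bool" where
  "dc S \<longleftrightarrow> (\<forall>i j i' j'. (i, j) \<in> S \<longrightarrow> i' \<le> i \<longrightarrow> j' \<le> j \<longrightarrow> (i', j') \<in> S)"

definition shape :: "(nat \<times> nat) set \<Rightarrow> bool" where
  "shape S \<longleftrightarrow> finite S \<and> dc S"

definition addc :: "(nat \<times> nat) set \<Rightarrow> (nat \<times> nat) set" where
  "addc S = {c. c \<notin> S \<and> dc (insert c S)}"

definition remc :: "(nat \<times> nat) set \<Rightarrow> (nat \<times> nat) set" where
  "remc S = {c \<in> S. dc (S - {c})}"

definition len :: "(nat \<times> nat) set \<Rightarrow> nat \<Rightarrow> nat" where
  "len S i = card {j. (i, j) \<in> S}"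

lemma dcD: "dc S \<Longrightarrow> (i, j) \<in> S \<Longrightarrow> i' \<le> i \<Longrightarrow> j' \<le> j \<Longrightarrow> (i', j') \<in> S"
  unfolding dc_def by blast

lemma dcI: "(\<And>i j i' j'. (i, j) \<in> S \<Longrightarrow> i' \<le> i \<Longrightarrow> j' \<le> j \<Longrightarrow> (i', j') \<in> S) \<Longrightarrow> dc S"
  unfolding dc_def by blast

lemma dc_insert_iff:
  assumes "dc S"
  shows "dc (insert (i, j) S) \<longleftrightarrow> ((0 < i \<longrightarrow> (i - 1, j) \<in> S) \<and> (0 < j \<longrightarrow> (i, j - 1) \<in> S))"
proof
  assume d: "dc (insert (i, j) S)"
  show "(0 < i \<longrightarrow> (i - 1, j) \<in> S) \<and> (0 < j \<longrightarrow> (i, j - 1) \<in> S)"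
  proof (intro conjI impI)
    assume "0 < i"
    then have "(i - 1, j) \<in> insert (i, j) S" using dcD[OF d, of i j "i - 1" j] by simp
    then show "(i - 1, j) \<in> S" using \<open>0 < i\<close> by auto
  next
    assume "0 < j"
    then have "(i, j - 1) \<in> insert (i, j) S" using dcD[OF d, of i j i "j - 1"] by simp
    then show "(i, j - 1) \<in> S" using \<open>0 < j\<close> by auto
  qed
next
  assume h: "(0 < i \<longrightarrow> (i - 1, j) \<in> S) \<and> (0 < j \<longrightarrow> (i, j - 1) \<in> S)"
  show "dc (insert (i, j) S)"
    unfolding dc_def
  proof (intro allI impI)
    fix a b a' b'
    assume m: "(a, b) \<in> insert (i, j) S" and le: "a' \<le> a" "b' \<le> b"
    show "(a', b') \<in> insert (i, j) S"
    proof (cases "(a, b) \<in> S")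
      case True
      then show ?thesis using dcD[OF assms] le by blast
    next
      case False
      then have ab: "a = i" "b = j" using m by auto
      show ?thesis
      proof (cases "a' = i \<and> b' = j")
        case True then show ?thesis by simp
      next
        case False
        then have "a' < i \<or> b' < j" using ab le by auto
        then show ?thesis
        proof
          assume "a' < i"
          then have "(i - 1, j) \<in> S" using h by auto
          then show ?thesis using dcD[OF assms \<open>(i - 1, j) \<in> S\<close>, of a' b'] le ab \<open>a' < i\<close> by auto
        next
          assume "b' < j"
          then have "(i, j - 1) \<in> S" using h by auto
          then show ?thesis using dcD[OF assms \<open>(i, j - 1) \<in> S\<close>, of a' b'] le ab \<open>b' < j\<close> by auto
        qed
      qed
    qed
  qed
qed

lemma dc_remove_iff:
  assumes "dc S" "(i, j) \<in> S"
  shows "dc (S - {(i, j)}) \<longleftrightarrow> ((Suc i, j) \<notin> S \<and> (i, Suc j) \<notin> S)"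
proof
  assume d: "dc (S - {(i, j)})"
  show "(Suc i, j) \<notin> S \<and> (i, Suc j) \<notin> S"
  proof (intro conjI notI)
    assume "(Suc i, j) \<in> S"
    then have "(Suc i, j) \<in> S - {(i, j)}" by auto
    then have "(i, j) \<in> S - {(i, j)}" using dcD[OF d, of "Suc i" j i j] by simp
    then show False by simp
  next
    assume "(i, Suc j) \<in> S"
    then have "(i, Suc j) \<in> S - {(i, j)}" by auto
    then have "(i, j) \<in> S - {(i, j)}" using dcD[OF d, of i "Suc j" i j] by simp
    then show False by simp
  qed
next
  assume h: "(Suc i, j) \<notin> S \<and> (i, Suc j) \<notin> S"
  show "dc (S - {(i, j)})"
  proof (rule dcI)
    fix a b a' b'
    assume m: "(a, b) \<in> S - {(i, j)}" and le: "a' \<le> a" "b' \<le> b"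
    have "(a', b') \<in> S" using m le dcD[OF assms(1), of a b a' b'] by blast
    moreover have "(a', b') \<noteq> (i, j)"
    proof
      assume e: "(a', b') = (i, j)"
      then have "i \<le> a" "j \<le> b" "(a, b) \<noteq> (i, j)" using le m by auto
      then have "Suc i \<le> a \<or> Suc j \<le> b" by auto
      then show False
      proof
        assume "Suc i \<le> a"
        then have "(Suc i, j) \<in> S" using m \<open>j \<le> b\<close> dcD[OF assms(1), of a b "Suc i" j] by blast
        then show False using h by simp
      next
        assume "Suc j \<le> b"
        then have "(i, Suc j) \<in> S" using m \<open>i \<le> a\<close> dcD[OF assms(1), of a b i "Suc j"] by blast
        then show False using h by simp
      qed
    qed
    ultimately show "(a', b') \<in> S - {(i, j)}" by simp
  qed
qed

lemma downclosed_nat: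
  fixes A :: "nat set"
  assumes "finite A" "\<forall>j\<in>A. \<forall>j'\<le>j. j' \<in> A"
  shows "A = {..<card A}"
proof -
  have sub: "A \<subseteq> {..<card A}"
  proof
    fix j assume "j \<in> A"
    then have "{..j} \<subseteq> A" using assms(2) by auto
    then have "card {..j} \<le> card A" using card_mono[OF assms(1)] by blast
    then show "j \<in> {..<card A}" by simp
  qed
  show ?thesis using card_subset_eq[OF _ sub] by simp
qed

lemma rowchar:
  assumes "shape S"
  shows "(i, j) \<in> S \<longleftrightarrow> j < len S i"
proof -
  have fin: "finite {j. (i, j) \<in> S}"
  proof -
    have "{j. (i, j) \<in> S} \<subseteq> snd ` S" by force
    then show ?thesis using assms unfolding shape_def by (meson finite_imageI finite_subset)
  qed
  have "{j. (i, j) \<in> S} = {..<len S i}"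
    unfolding len_def
    apply (rule downclosed_nat[OF fin])
    using assms unfolding shape_def using dcD by blast
  then show ?thesis by (metis lessThan_iff mem_Collect_eq)
qed

lemma len_Suc_le:
  assumes "shape S"
  shows "len S (Suc i) \<le> len S i"
proof -
  have "{j. (Suc i, j) \<in> S} \<subseteq> {j. (i, j) \<in> S}"
    using assms unfolding shape_def using dcD[of S "Suc i" _ i] by auto
  moreover have "finite {j. (i, j) \<in> S}"
  proof -
    have "{j. (i, j) \<in> S} \<subseteq> snd ` S" by force
    then show ?thesis using assms unfolding shape_def by (meson finite_imageI finite_subset)
  qed
  ultimately show ?thesis unfolding len_def by (rule card_mono[rotated])
qed

lemma len_antimono:
  assumes "shape S" "i \<le> i'"
  shows "len S i' \<le> len S i"
  using assms(2)
proof (induction i' rule: dec_induct)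
  case base then show ?case by simp
next
  case (step n) then show ?case using len_Suc_le[OF assms(1), of n] by simp
qed

lemma addc_char:
  assumes "shape S"
  shows "(i, j) \<in> addc S \<longleftrightarrow> j = len S i \<and> (0 < i \<longrightarrow> len S i < len S (i - 1))"
proof -
  have d: "dc S" using assms shape_def by auto
  have "(i, j) \<in> addc S \<longleftrightarrow> \<not> j < len S i \<and> (0 < i \<longrightarrow> j < len S (i - 1)) \<and> (0 < j \<longrightarrow> j - 1 < len S i)"
    unfolding addc_def using dc_insert_iff[OF d] rowchar[OF assms] by auto
  also have "\<dots> \<longleftrightarrow> j = len S i \<and> (0 < i \<longrightarrow> len S i < len S (i - 1))"
    by auto
  finally show ?thesis .
qed

lemma remc_char:
  assumes "shape S"
  shows "(i, j) \<in> remc S \<longleftrightarrow> Suc j = len S i \<and> len S (Suc i) < len S i"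
proof -
  have d: "dc S" using assms shape_def by auto
  have "(i, j) \<in> remc S \<longleftrightarrow> j < len S i \<and> \<not> j < len S (Suc i) \<and> \<not> Suc j < len S i"
    unfolding remc_def using dc_remove_iff[OF d] rowchar[OF assms] by auto
  also have "\<dots> \<longleftrightarrow> Suc j = len S i \<and> len S (Suc i) < len S i"
    by auto
  finally show ?thesis .
qed

lemma addc_eq:
  assumes "shape S"
  shows "addc S = (\<lambda>i. (i, len S i)) ` {i. i = 0 \<or> len S i < len S (i - 1)}"
  using addc_char[OF assms] by auto

lemma remc_eq:
  assumes "shape S"
  shows "remc S = (\<lambda>i. (i, len S i - 1)) ` {i. len S (Suc i) < len S i}"
proof (rule set_eqI)
  fix c :: "nat \<times> nat"
  obtain i j where c: "c = (i, j)" by fastforce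
  show "c \<in> remc S \<longleftrightarrow> c \<in> (\<lambda>i. (i, len S i - 1)) ` {i. len S (Suc i) < len S i}"
    unfolding c remc_char[OF assms] by auto
qed

lemma card_addc:
  assumes "shape S"
  shows "card (addc S) = Suc (card (remc S))"
proof -
  let ?D = "{i. len S (Suc i) < len S i}"
  have finD: "finite ?D"
  proof -
    have "?D \<subseteq> fst ` S"
    proof
      fix i assume "i \<in> ?D"
      then have "0 < len S i" by auto
      then have "(i, 0) \<in> S" using rowchar[OF assms] by auto
      then show "i \<in> fst ` S" by force
    qed
    then show ?thesis using assms unfolding shape_def by (meson finite_imageI finite_subset)
  qed
  have "{i. i = 0 \<or> len S i < len S (i - 1)} = insert 0 (Suc ` ?D)"
  proof (rule set_eqI)
    fix i show "i \<in> {i. i = 0 \<or> len S i < len S (i - 1)} \<longleftrightarrow> i \<in> insert 0 (Suc ` ?D)"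
      by (cases i) auto
  qed
  then have "card (addc S) = card (insert 0 (Suc ` ?D))"
    unfolding addc_eq[OF assms]
    by (metis (no_types, lifting) card_image inj_onI prod.inject)
  also have "\<dots> = Suc (card ?D)"
    using finD by (simp add: card_image)
  also have "card ?D = card (remc S)"
    unfolding remc_eq[OF assms]
    by (metis (no_types, lifting) card_image inj_onI prod.inject)
  finally show ?thesis .
qed

lemma finite_remc: "shape S \<Longrightarrow> finite (remc S)"
  unfolding remc_def shape_def by auto

lemma finite_addc:
  assumes "shape S" shows "finite (addc S)"
  using card_addc[OF assms] card.infinite by fastforce



fun W :: "nat \<Rightarrow> (nat \<times> nat) set \<Rightarrow> nat" where
  "W 0 S = 1"
| "W (Suc j) S = (\<Sum>r\<in>remc S. W j (S - {r}))"

lemma addc_notin: "a \<in> addc S \<Longrightarrow> a \<notin> S"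
  unfolding addc_def by auto

lemma shape_insert_addc: "shape S \<Longrightarrow> a \<in> addc S \<Longrightarrow> shape (insert a S)"
  unfolding shape_def addc_def by auto

lemma addc_in_remc: "shape S \<Longrightarrow> a \<in> addc S \<Longrightarrow> a \<in> remc (insert a S)"
  unfolding remc_def addc_def shape_def by (auto simp: insert_Diff_if)

lemma shape_remove: "shape S \<Longrightarrow> r \<in> remc S \<Longrightarrow> shape (S - {r})"
  unfolding shape_def remc_def by auto

lemma remc_in_addc: "shape S \<Longrightarrow> r \<in> remc S \<Longrightarrow> r \<in> addc (S - {r})"
  unfolding shape_def remc_def addc_def by (auto simp: insert_absorb)

lemma remc_sub: "remc S \<subseteq> S"
  unfolding remc_def by auto

lemma pair_swap:
  assumes "shape S"
  shows "(a \<in> addc S \<and> r \<in> remc (insert a S) \<and> r \<noteq> a) \<longleftrightarrow> (r \<in> remc S \<and> a \<in> addc (S - {r}) \<and> a \<noteq> r)"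
proof
  assume h: "a \<in> addc S \<and> r \<in> remc (insert a S) \<and> r \<noteq> a"
  have dS: "dc S" using assms shape_def by auto
  have aS: "a \<notin> S" using h addc_notin by auto
  have rS: "r \<in> S" using h remc_sub by blast
  have eq: "insert a S - {r} = insert a (S - {r})" using h by auto
  have d1: "dc (insert a (S - {r}))" using h eq unfolding remc_def by auto
  have d2: "dc (S - {r})"
  proof (rule dcI)
    fix i j i' j'
    assume m: "(i, j) \<in> S - {r}" "i' \<le> i" "j' \<le> j"
    have "(i', j') \<in> insert a (S - {r})" using dcD[OF d1, of i j i' j'] m by auto
    moreover have "(i', j') \<noteq> a"
    proof
      assume "(i', j') = a"
      then have "a \<in> S" using dcD[OF dS, of i j i' j'] m by auto
      then show False using aS by simp
    qed
    ultimately show "(i', j') \<in> S - {r}" by auto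
  qed
  show "r \<in> remc S \<and> a \<in> addc (S - {r}) \<and> a \<noteq> r"
    using rS d1 d2 aS h unfolding remc_def addc_def by auto
next
  assume h: "r \<in> remc S \<and> a \<in> addc (S - {r}) \<and> a \<noteq> r"
  have dS: "dc S" using assms shape_def by auto
  have rS: "r \<in> S" using h remc_sub by blast
  have "a \<notin> S - {r}" using h addc_notin by blast
  then have aS: "a \<notin> S" using h by auto
  have d1: "dc (insert a (S - {r}))" using h unfolding addc_def by auto
  have d2: "dc (insert a S)"
  proof (rule dcI)
    fix i j i' j'
    assume m: "(i, j) \<in> insert a S" "i' \<le> i" "j' \<le> j"
    show "(i', j') \<in> insert a S"
    proof (cases "(i, j) = a")
      case True
      then have "(i, j) \<in> insert a (S - {r})" by simp
      then show ?thesis using dcD[OF d1, of i j i' j'] m by auto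
    next
      case False
      then show ?thesis using dcD[OF dS, of i j i' j'] m by auto
    qed
  qed
  have eq: "insert a S - {r} = insert a (S - {r})" using h by auto
  show "a \<in> addc S \<and> r \<in> remc (insert a S) \<and> r \<noteq> a"
    using aS d2 eq d1 rS h unfolding remc_def addc_def by auto
qed

lemma W_Suc_sum: "shape S \<Longrightarrow> (\<Sum>r\<in>remc S. j * W (j - 1) (S - {r})) = j * W j S"
  by (cases j) (auto simp: sum_distrib_left)

lemma comm:
  assumes "shape S"
  shows "(\<Sum>a\<in>addc S. W j (insert a S)) = W (Suc j) S + W j S + j * W (j - 1) S"
  using assms
proof (induction j arbitrary: S)
  case 0
  then show ?case using card_addc[OF 0] by simp
next
  case (Suc j)
  note sh = Suc.prems
  define f where "f a r = W j (insert a (S - {r}))" for a r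
  define inner where "inner r = (\<Sum>a\<in>addc (S - {r}) - {r}. f a r)" for r
  have finA: "finite (addc S)" using finite_addc[OF sh] .
  have finS: "finite S" using sh shape_def by auto
  have s1: "W (Suc j) (insert a S) = W j S + (\<Sum>r\<in>{r\<in>S. r \<in> remc (insert a S) \<and> r \<noteq> a}. f a r)"
    if a: "a \<in> addc S" for a
  proof -
    have sh2: "shape (insert a S)" using shape_insert_addc[OF sh a] .
    have aS: "a \<notin> S" using addc_notin[OF a] .
    have "W (Suc j) (insert a S) = (\<Sum>r\<in>remc (insert a S). W j (insert a S - {r}))" by simp
    also have "\<dots> = W j (insert a S - {a}) + (\<Sum>r\<in>remc (insert a S) - {a}. W j (insert a S - {r}))"
      by (rule sum.remove[OF finite_remc[OF sh2] addc_in_remc[OF sh a]])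
    also have "insert a S - {a} = S" using aS by auto
    also have "(\<Sum>r\<in>remc (insert a S) - {a}. W j (insert a S - {r})) = (\<Sum>r\<in>{r\<in>S. r \<in> remc (insert a S) \<and> r \<noteq> a}. f a r)"
    proof (rule sum.cong)
      show "remc (insert a S) - {a} = {r\<in>S. r \<in> remc (insert a S) \<and> r \<noteq> a}"
        using remc_sub[of "insert a S"] by auto
    next
      fix r assume "r \<in> {r\<in>S. r \<in> remc (insert a S) \<and> r \<noteq> a}"
      then have "insert a S - {r} = insert a (S - {r})" by auto
      then show "W j (insert a S - {r}) = f a r" unfolding f_def by simp
    qed
    finally show ?thesis .
  qed
  have "(\<Sum>a\<in>addc S. W (Suc j) (insert a S)) = (\<Sum>a\<in>addc S. W j S + (\<Sum>r\<in>{r\<in>S. r \<in> remc (insert a S) \<and> r \<noteq> a}. f a r))"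
    using s1 by (rule sum.cong[OF refl])
  also have "\<dots> = card (addc S) * W j S + (\<Sum>a\<in>addc S. \<Sum>r\<in>{r\<in>S. r \<in> remc (insert a S) \<and> r \<noteq> a}. f a r)"
    by (simp add: sum.distrib)
  also have "(\<Sum>a\<in>addc S. \<Sum>r\<in>{r\<in>S. r \<in> remc (insert a S) \<and> r \<noteq> a}. f a r)
      = (\<Sum>r\<in>S. \<Sum>a\<in>{a\<in>addc S. r \<in> remc (insert a S) \<and> r \<noteq> a}. f a r)"
    by (rule sum.swap_restrict[OF finA finS])
  also have "\<dots> = (\<Sum>r\<in>S. if r \<in> remc S then inner r else 0)"
  proof (rule sum.cong[OF refl])
    fix r assume "r \<in> S"
    have "{a\<in>addc S. r \<in> remc (insert a S) \<and> r \<noteq> a} = (if r \<in> remc S then addc (S - {r}) - {r} else {})"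
      using pair_swap[OF sh] by auto
    then show "(\<Sum>a\<in>{a\<in>addc S. r \<in> remc (insert a S) \<and> r \<noteq> a}. f a r) = (if r \<in> remc S then inner r else 0)"
      unfolding inner_def by simp
  qed
  also have "\<dots> = (\<Sum>r\<in>remc S. inner r)"
  proof -
    have "{x \<in> S. x \<in> remc S} = remc S" using remc_sub[of S] by blast
    then show ?thesis using sum.inter_filter[OF finS, of inner "\<lambda>r. r \<in> remc S"] by simp
  qed
  finally have L: "(\<Sum>a\<in>addc S. W (Suc j) (insert a S)) = card (addc S) * W j S + (\<Sum>r\<in>remc S. inner r)" .
  have ir: "W j S + inner r = W (Suc j) (S - {r}) + W j (S - {r}) + j * W (j - 1) (S - {r})"
    if r: "r \<in> remc S" for r
  proof -
    have sh2: "shape (S - {r})" using shape_remove[OF sh r] .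
    have ins: "insert r (S - {r}) = S" using r remc_sub by blast
    have "(\<Sum>a\<in>addc (S - {r}). W j (insert a (S - {r}))) = W j S + inner r"
      unfolding inner_def f_def
      using sum.remove[OF finite_addc[OF sh2] remc_in_addc[OF sh r], of "\<lambda>a. W j (insert a (S - {r}))"] ins
      by simp
    then show ?thesis using Suc.IH[OF sh2] by simp
  qed
  have "card (remc S) * W j S + (\<Sum>r\<in>remc S. inner r) = (\<Sum>r\<in>remc S. W j S + inner r)"
    by (simp add: sum.distrib)
  also have "\<dots> = (\<Sum>r\<in>remc S. W (Suc j) (S - {r}) + W j (S - {r}) + j * W (j - 1) (S - {r}))"
    using ir by (rule sum.cong[OF refl])
  also have "\<dots> = W (Suc (Suc j)) S + W (Suc j) S + j * W j S"
    using W_Suc_sum[OF sh, of j] by (simp add: sum.distrib)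
  finally have R: "card (remc S) * W j S + (\<Sum>r\<in>remc S. inner r) = W (Suc (Suc j)) S + W (Suc j) S + j * W j S" .
  show ?case using L R card_addc[OF sh] by simp
qed



fun cc :: "nat \<Rightarrow> nat \<Rightarrow> nat" where
  "cc 0 j = (if j = 0 then 1 else 0)"
| "cc (Suc 0) j = (if j = 0 then 0 else cc 0 (j - 1)) + cc 0 j"
| "cc (Suc (Suc r)) j = (if j = 0 then 0 else cc (Suc r) (j - 1)) + cc (Suc r) j + Suc r * cc r j"

lemma cc_Suc: "cc (Suc r) j = (if j = 0 then 0 else cc r (j - 1)) + cc r j + r * cc (r - 1) j"
  by (cases r) auto

lemma cc_big: "r < j \<Longrightarrow> cc r j = 0"
  by (induction r j rule: cc.induct) auto

lemma ccK: "Suc j * cc r (Suc j) = r * cc (r - 1) j"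
proof (induction r arbitrary: j rule: less_induct)
  case (less r)
  show ?case
  proof (cases r)
    case 0 then show ?thesis by simp
  next
    case (Suc q)
    have e1: "cc r (Suc j) = cc q j + cc q (Suc j) + q * cc (q - 1) (Suc j)"
      using cc_Suc[of q "Suc j"] Suc by simp
    have ih1: "Suc j * cc q (Suc j) = q * cc (q - 1) j" using less.IH[of q j] Suc by simp
    have ih2: "Suc j * cc (q - 1) (Suc j) = (q - 1) * cc (q - 1 - 1) j"
      using less.IH[of "q - 1" j] Suc by simp
    have ih3: "j * cc q j = (if j = 0 then 0 else q * cc (q - 1) (j - 1))"
    proof (cases j)
      case 0 then show ?thesis by simp
    next
      case (Suc j')
      then show ?thesis using less.IH[of q j'] \<open>r = Suc q\<close> by simp
    qed
    have "Suc j * cc r (Suc j) = Suc j * cc q j + Suc j * cc q (Suc j) + q * (Suc j * cc (q - 1) (Suc j))"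
      unfolding e1 by (simp add: algebra_simps)
    also have "\<dots> = cc q j + j * cc q j + q * cc (q - 1) j + q * ((q - 1) * cc (q - 1 - 1) j)"
      using ih1 ih2 by simp
    also have "\<dots> = Suc q * cc q j"
    proof (cases q)
      case 0
      then show ?thesis by (cases j) auto
    next
      case (Suc p)
      have "cc q j = (if j = 0 then 0 else cc p (j - 1)) + cc p j + p * cc (p - 1) j"
        using cc_Suc[of p j] Suc by simp
      then show ?thesis using ih3 Suc by (simp add: algebra_simps)
    qed
    finally show ?thesis using Suc by simp
  qed
qed

fun Eup :: "nat \<Rightarrow> (nat \<times> nat) set \<Rightarrow> nat" where
  "Eup 0 S = 1"
| "Eup (Suc N) S = (\<Sum>a\<in>addc S. Eup N (insert a S))"

lemma Eformula:
  assumes "shape S" "N \<le> B"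
  shows "Eup N S = (\<Sum>j\<le>B. cc N j * W j S)"
  using assms
proof (induction N arbitrary: S B)
  case 0
  have "(\<Sum>j\<le>B. cc 0 j * W j S) = (\<Sum>j\<le>B. if j = 0 then 1 else 0)"
    by (rule sum.cong) auto
  also have "\<dots> = 1" by (simp add: sum.delta)
  finally show ?case by simp
next
  case (Suc N)
  obtain B0 where B: "B = Suc B0" and NB: "N \<le> B0" using Suc.prems(2) by (cases B) auto
  have sh: "shape S" using Suc.prems(1) .
  have "Eup (Suc N) S = (\<Sum>a\<in>addc S. \<Sum>j\<le>B. cc N j * W j (insert a S))"
    using Suc.IH[OF shape_insert_addc[OF sh], of _ B] NB B by simp
  also have "\<dots> = (\<Sum>j\<le>B. cc N j * (\<Sum>a\<in>addc S. W j (insert a S)))"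
    by (simp add: sum.swap[of _ "addc S"] sum_distrib_left)
  also have "\<dots> = (\<Sum>j\<le>B. cc N j * (W (Suc j) S + W j S + j * W (j - 1) S))"
    using comm[OF sh] by simp
  also have "\<dots> = (\<Sum>j\<le>B. cc N j * W (Suc j) S) + (\<Sum>j\<le>B. cc N j * W j S) + (\<Sum>j\<le>B. cc N j * (j * W (j - 1) S))"
    by (simp add: algebra_simps sum.distrib)
  finally have L: "Eup (Suc N) S = (\<Sum>j\<le>B. cc N j * W (Suc j) S) + (\<Sum>j\<le>B. cc N j * W j S) + (\<Sum>j\<le>B. cc N j * (j * W (j - 1) S))" .
  have "(\<Sum>j\<le>B. cc (Suc N) j * W j S) = (\<Sum>j\<le>B. (if j = 0 then 0 else cc N (j - 1)) * W j S) + (\<Sum>j\<le>B. cc N j * W j S) + (\<Sum>j\<le>B. N * cc (N - 1) j * W j S)"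
    by (simp add: cc_Suc algebra_simps sum.distrib)
  also have "(\<Sum>j\<le>B. (if j = 0 then 0 else cc N (j - 1)) * W j S) = (\<Sum>j\<le>B0. cc N j * W (Suc j) S)"
    unfolding B sum.atMost_Suc_shift by (simp del: W.simps(2))
  also have "\<dots> = (\<Sum>j\<le>B. cc N j * W (Suc j) S)"
    unfolding B using cc_big[of N "Suc B0"] NB by simp
  also have "(\<Sum>j\<le>B. N * cc (N - 1) j * W j S) = (\<Sum>j\<le>B. Suc j * cc N (Suc j) * W j S)"
    using ccK by simp
  also have "\<dots> = (\<Sum>j\<le>B0. Suc j * cc N (Suc j) * W j S)"
    unfolding B using cc_big[of N "Suc (Suc B0)"] NB by simp
  also have "\<dots> = (\<Sum>j\<le>Suc B0. cc N j * (j * W (j - 1) S))"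
    by (subst sum.atMost_Suc_shift) (simp add: algebra_simps)
  also have "\<dots> = (\<Sum>j\<le>B. cc N j * (j * W (j - 1) S))"
    using B by simp
  finally show ?case using L by simp
qed

fun Ch :: "nat \<Rightarrow> (nat \<times> nat) set \<Rightarrow> (nat \<times> nat) set \<Rightarrow> nat" where
  "Ch 0 U S = (if U = S then 1 else 0)"
| "Ch (Suc N) U S = (\<Sum>r\<in>remc U. Ch N (U - {r}) S)"

lemma Ch_bottom:
  assumes "shape U" "shape S"
  shows "Ch (Suc N) U S = (\<Sum>a\<in>addc S. Ch N U (insert a S))"
  using assms(1)
proof (induction N arbitrary: U)
  case 0
  have X: "{r\<in>remc U. U - {r} = S} = {a\<in>addc S. U = insert a S}"
  proof (rule set_eqI, rule iffI)
    fix r assume h: "r \<in> {r\<in>remc U. U - {r} = S}"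
    then have "r \<in> U" using remc_sub by blast
    then have "insert r S = U" using h by auto
    moreover have "r \<notin> S" using h by auto
    moreover have "dc U" using 0 shape_def by auto
    ultimately show "r \<in> {a\<in>addc S. U = insert a S}" unfolding addc_def by auto
  next
    fix a assume h: "a \<in> {a\<in>addc S. U = insert a S}"
    then have "a \<notin> S" using addc_notin by auto
    then have "U - {a} = S" using h by auto
    moreover have "dc S" using assms(2) shape_def by auto
    ultimately show "a \<in> {r\<in>remc U. U - {r} = S}" unfolding remc_def using h by auto
  qed
  have "Ch (Suc 0) U S = (\<Sum>r\<in>remc U. if U - {r} = S then 1 else 0)" by simp
  also have "\<dots> = card {r\<in>remc U. U - {r} = S}"
    using sum.inter_filter[OF finite_remc[OF 0], of "\<lambda>_. 1::nat"] by simp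
  also have "\<dots> = card {a\<in>addc S. U = insert a S}" using X by simp
  also have "\<dots> = (\<Sum>a\<in>addc S. if U = insert a S then 1 else 0)"
    using sum.inter_filter[OF finite_addc[OF assms(2)], of "\<lambda>_. 1::nat"] by simp
  finally show ?case by simp
next
  case (Suc N)
  have "Ch (Suc (Suc N)) U S = (\<Sum>r\<in>remc U. \<Sum>a\<in>addc S. Ch N (U - {r}) (insert a S))"
    using Suc.IH[OF shape_remove[OF Suc.prems]] by simp
  also have "\<dots> = (\<Sum>a\<in>addc S. \<Sum>r\<in>remc U. Ch N (U - {r}) (insert a S))"
    by (rule sum.swap)
  finally show ?case by simp
qed

definition shapes :: "nat \<Rightarrow> (nat \<times> nat) set set" where
  "shapes n = {U. shape U \<and> card U = n}"

lemma shape_bound: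
  assumes "shape U" "(i, j) \<in> U"
  shows "i < card U \<and> j < card U"
proof
  have "(\<lambda>i'. (i', 0)) ` {..i} \<subseteq> U" using dcD[of U i j] assms shape_def by auto
  then have "card ((\<lambda>i'. (i', (0::nat))) ` {..i}) \<le> card U" using assms(1) shape_def card_mono by metis
  moreover have "card ((\<lambda>i'. (i', (0::nat))) ` {..i}) = Suc i" by (simp add: card_image inj_on_def)
  ultimately show "i < card U" by simp
next
  have "(\<lambda>j'. (0, j')) ` {..j} \<subseteq> U" using dcD[of U i j] assms shape_def by auto
  then have "card ((\<lambda>j'. ((0::nat), j')) ` {..j}) \<le> card U" using assms(1) shape_def card_mono by metis
  moreover have "card ((\<lambda>j'. ((0::nat), j')) ` {..j}) = Suc j" by (simp add: card_image inj_on_def)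
  ultimately show "j < card U" by simp
qed

lemma finite_shapes: "finite (shapes n)"
proof -
  have "shapes n \<subseteq> Pow ({..<n} \<times> {..<n})"
    unfolding shapes_def using shape_bound by fastforce
  then show ?thesis by (rule finite_subset) simp
qed

lemma Eup_Ch:
  assumes "shape S"
  shows "Eup N S = (\<Sum>U\<in>shapes (card S + N). Ch N U S)"
  using assms
proof (induction N arbitrary: S)
  case 0
  have "S \<in> shapes (card S)" using 0 shapes_def by auto
  then show ?case using finite_shapes by (simp add: sum.delta)
next
  case (Suc N)
  have fin: "finite S" using Suc.prems shape_def by auto
  have "(\<Sum>U\<in>shapes (card S + Suc N). Ch (Suc N) U S) = (\<Sum>U\<in>shapes (card S + Suc N). \<Sum>a\<in>addc S. Ch N U (insert a S))"
    using Ch_bottom[OF _ Suc.prems] unfolding shapes_def by simp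
  also have "\<dots> = (\<Sum>a\<in>addc S. \<Sum>U\<in>shapes (card S + Suc N). Ch N U (insert a S))"
    by (rule sum.swap)
  also have "\<dots> = (\<Sum>a\<in>addc S. Eup N (insert a S))"
  proof (rule sum.cong[OF refl])
    fix a assume a: "a \<in> addc S"
    have "card (insert a S) + N = card S + Suc N" using addc_notin[OF a] fin by simp
    then show "(\<Sum>U\<in>shapes (card S + Suc N). Ch N U (insert a S)) = Eup N (insert a S)"
      using Suc.IH[OF shape_insert_addc[OF Suc.prems a]] by simp
  qed
  finally show ?case by simp
qed



definition sytU :: "(nat \<times> nat) set \<Rightarrow> (nat \<times> nat \<Rightarrow> nat) \<Rightarrow> bool" where
  "sytU U T \<longleftrightarrow> bij_betw T U {1..card U} \<and> (\<forall>c. c \<notin> U \<longrightarrow> T c = 0)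
     \<and> (\<forall>i j. (i, Suc j) \<in> U \<longrightarrow> T (i, j) < T (i, Suc j))
     \<and> (\<forall>i j. (Suc i, j) \<in> U \<longrightarrow> T (i, j) < T (Suc i, j))"

definition Atab :: "(nat \<times> nat) set \<Rightarrow> (nat \<times> nat \<Rightarrow> nat) set" where
  "Atab U = {T. sytU U T}"

lemma card_remc_remove: "r \<in> remc U \<Longrightarrow> card (U - {r}) = card U - 1"
  using remc_sub[of U] by (auto intro: card_Diff_singleton_if)

lemma bij_insert:
  assumes "bij_betw f A B" "a \<notin> A" "f a \<notin> B"
  shows "bij_betw f (insert a A) (insert (f a) B)"
  using notIn_Un_bij_betw3[of a A f B] assms by simp

lemma bij_remove:
  assumes "bij_betw f A B" "a \<in> A"
  shows "bij_betw f (A - {a}) (B - {f a})"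
  using bij_betw_DiffI[OF assms(1) bij_betw_singletonI[of f a "f a"]] assms(2) bij_betw_apply[OF assms(1,2)] by auto

lemma sytU_val:
  assumes "sytU U T" "c \<in> U"
  shows "1 \<le> T c \<and> T c \<le> card U"
  using bij_betw_apply[of T U "{1..card U}" c] assms unfolding sytU_def by auto

lemma sytU_out: "sytU U T \<Longrightarrow> c \<notin> U \<Longrightarrow> T c = 0"
  unfolding sytU_def by blast

lemma remc_no_right: "shape U \<Longrightarrow> (i, j) \<in> remc U \<Longrightarrow> (i, Suc j) \<notin> U"
  using dc_remove_iff[of U i j] unfolding remc_def shape_def by auto

lemma remc_no_below: "shape U \<Longrightarrow> (i, j) \<in> remc U \<Longrightarrow> (Suc i, j) \<notin> U"
  using dc_remove_iff[of U i j] unfolding remc_def shape_def by auto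

lemma peel_in:
  assumes sh: "shape U" and cU: "card U = Suc N" and r: "r \<in> remc U" and T: "sytU (U - {r}) T"
  shows "sytU U (T(r := Suc N))"
proof -
  have rU: "r \<in> U" using r remc_sub by blast
  have fin: "finite U" using sh shape_def by auto
  have cU': "card (U - {r}) = N" using cU rU fin by simp
  have dU: "dc U" using sh shape_def by auto
  have b0: "bij_betw T (U - {r}) {1..N}" using T cU' unfolding sytU_def by simp
  have b1: "bij_betw (T(r := Suc N)) (U - {r}) {1..N}"
    using b0 by (rule bij_betw_cong[THEN iffD1, rotated]) auto
  have "bij_betw (T(r := Suc N)) (insert r (U - {r})) (insert ((T(r := Suc N)) r) {1..N})"
    by (rule bij_insert[OF b1]) auto
  moreover have "insert r (U - {r}) = U" using rU by auto
  moreover have "insert ((T(r := Suc N)) r) {1..N} = {1..card U}" using cU by auto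
  ultimately have bij: "bij_betw (T(r := Suc N)) U {1..card U}" by simp
  have out: "\<forall>c. c \<notin> U \<longrightarrow> (T(r := Suc N)) c = 0"
    using T rU unfolding sytU_def by auto
  obtain ri rj where rr: "r = (ri, rj)" by fastforce
  have row: "(T(r := Suc N)) (i, j) < (T(r := Suc N)) (i, Suc j)" if m: "(i, Suc j) \<in> U" for i j
  proof -
    have m0: "(i, j) \<in> U" using dcD[OF dU m, of i j] by simp
    have ne: "(i, j) \<noteq> r" using remc_no_right[OF sh, of ri rj] r rr m by auto
    show ?thesis
    proof (cases "(i, Suc j) = r")
      case True
      have "T (i, j) \<le> N" using sytU_val[OF T, of "(i, j)"] m0 ne cU' by auto
      then show ?thesis using True ne by simp
    next
      case False
      then show ?thesis using T m ne unfolding sytU_def by auto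
    qed
  qed
  have col: "(T(r := Suc N)) (i, j) < (T(r := Suc N)) (Suc i, j)" if m: "(Suc i, j) \<in> U" for i j
  proof -
    have m0: "(i, j) \<in> U" using dcD[OF dU m, of i j] by simp
    have ne: "(i, j) \<noteq> r" using remc_no_below[OF sh, of ri rj] r rr m by auto
    show ?thesis
    proof (cases "(Suc i, j) = r")
      case True
      have "T (i, j) \<le> N" using sytU_val[OF T, of "(i, j)"] m0 ne cU' by auto
      then show ?thesis using True ne by simp
    next
      case False
      then show ?thesis using T m ne unfolding sytU_def by auto
    qed
  qed
  show ?thesis unfolding sytU_def using bij out row col by blast
qed

lemma peel_out:
  assumes sh: "shape U" and cU: "card U = Suc N" and T: "sytU U T"
  shows "\<exists>r\<in>remc U. T r = Suc N \<and> sytU (U - {r}) (T(r := 0)) \<and> T = (T(r := 0))(r := Suc N)"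
proof -
  have fin: "finite U" using sh shape_def by auto
  have dU: "dc U" using sh shape_def by auto
  have bij: "bij_betw T U {1..card U}" using T sytU_def by auto
  have "Suc N \<in> T ` U" using bij cU unfolding bij_betw_def by auto
  then obtain r where rU: "r \<in> U" and Tr: "T r = Suc N" by auto
  obtain ri rj where rr: "r = (ri, rj)" by fastforce
  have n1: "(ri, Suc rj) \<notin> U"
  proof
    assume "(ri, Suc rj) \<in> U"
    then have "T (ri, rj) < T (ri, Suc rj)" "T (ri, Suc rj) \<le> card U"
      using T sytU_val[OF T] unfolding sytU_def by auto
    then show False using Tr rr cU by simp
  qed
  have n2: "(Suc ri, rj) \<notin> U"
  proof
    assume "(Suc ri, rj) \<in> U"
    then have "T (ri, rj) < T (Suc ri, rj)" "T (Suc ri, rj) \<le> card U"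
      using T sytU_val[OF T] unfolding sytU_def by auto
    then show False using Tr rr cU by simp
  qed
  have rrem: "r \<in> remc U" unfolding remc_def using dc_remove_iff[OF dU, of ri rj] rU rr n1 n2 by auto
  have cU': "card (U - {r}) = N" using cU rU fin by simp
  have b0: "bij_betw T (U - {r}) ({1..card U} - {T r})" by (rule bij_remove[OF bij rU])
  have "{1..card U} - {T r} = {1..N}" using cU Tr by auto
  then have b1: "bij_betw T (U - {r}) {1..card (U - {r})}" using b0 cU' by simp
  have b2: "bij_betw (T(r := 0)) (U - {r}) {1..card (U - {r})}"
    using b1 by (rule bij_betw_cong[THEN iffD1, rotated]) auto
  have out: "\<forall>c. c \<notin> U - {r} \<longrightarrow> (T(r := 0)) c = 0" using T unfolding sytU_def by auto
  have row: "\<forall>i j. (i, Suc j) \<in> U - {r} \<longrightarrow> (T(r := 0)) (i, j) < (T(r := 0)) (i, Suc j)"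
  proof (intro allI impI)
    fix i j assume m: "(i, Suc j) \<in> U - {r}"
    have "(i, j) \<noteq> r" using rr n1 m by auto
    then show "(T(r := 0)) (i, j) < (T(r := 0)) (i, Suc j)" using m T unfolding sytU_def by auto
  qed
  have col: "\<forall>i j. (Suc i, j) \<in> U - {r} \<longrightarrow> (T(r := 0)) (i, j) < (T(r := 0)) (Suc i, j)"
  proof (intro allI impI)
    fix i j assume m: "(Suc i, j) \<in> U - {r}"
    have "(i, j) \<noteq> r" using rr n2 m by auto
    then show "(T(r := 0)) (i, j) < (T(r := 0)) (Suc i, j)" using m T unfolding sytU_def by auto
  qed
  have "sytU (U - {r}) (T(r := 0))" unfolding sytU_def using b2 out row col by blast
  moreover have "T = (T(r := 0))(r := Suc N)" using Tr by auto
  ultimately show ?thesis using rrem Tr by blast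
qed

lemma A_peel:
  assumes "shape U" "card U = Suc N"
  shows "Atab U = (\<Union>r\<in>remc U. (\<lambda>T. T(r := Suc N)) ` Atab (U - {r}))"
proof (rule set_eqI, rule iffI)
  fix T assume "T \<in> Atab U"
  then obtain r where "r \<in> remc U" "sytU (U - {r}) (T(r := 0))" "T = (T(r := 0))(r := Suc N)"
    using peel_out[OF assms] unfolding Atab_def by blast
  then show "T \<in> (\<Union>r\<in>remc U. (\<lambda>T. T(r := Suc N)) ` Atab (U - {r}))"
    unfolding Atab_def by blast
next
  fix T assume "T \<in> (\<Union>r\<in>remc U. (\<lambda>T. T(r := Suc N)) ` Atab (U - {r}))"
  then show "T \<in> Atab U" using peel_in[OF assms] unfolding Atab_def by blast
qed

lemma card_union_peel:
  assumes sh: "shape U" and cU: "card U = Suc N"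
    and X: "\<And>r. r \<in> remc U \<Longrightarrow> X r \<subseteq> Atab (U - {r}) \<and> finite (X r)"
  shows "finite (\<Union>r\<in>remc U. (\<lambda>T. T(r := Suc N)) ` X r)
     \<and> card (\<Union>r\<in>remc U. (\<lambda>T. T(r := Suc N)) ` X r) = (\<Sum>r\<in>remc U. card (X r))"
proof
  have finR: "finite (remc U)" using finite_remc[OF sh] .
  have fin: "finite U" using sh shape_def by auto
  show "finite (\<Union>r\<in>remc U. (\<lambda>T. T(r := Suc N)) ` X r)" using finR X by blast
  have disj: "((\<lambda>T. T(r1 := Suc N)) ` X r1) \<inter> ((\<lambda>T. T(r2 := Suc N)) ` X r2) = {}"
    if r1: "r1 \<in> remc U" and r2: "r2 \<in> remc U" and ne: "r1 \<noteq> r2" for r1 r2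
  proof (rule ccontr)
    assume "((\<lambda>T. T(r1 := Suc N)) ` X r1) \<inter> ((\<lambda>T. T(r2 := Suc N)) ` X r2) \<noteq> {}"
    then obtain T1 T2 where t1: "T1 \<in> X r1" and t2: "T2 \<in> X r2" and e: "T1(r1 := Suc N) = T2(r2 := Suc N)"
      by blast
    have "T2 r1 = Suc N" using fun_cong[OF e, of r1] ne by simp
    moreover have "r1 \<in> U - {r2}" using r1 remc_sub ne by blast
    moreover have "sytU (U - {r2}) T2" using X[OF r2] t2 unfolding Atab_def by blast
    moreover have "card (U - {r2}) = N" using card_remc_remove[OF r2] cU by simp
    ultimately show False using sytU_val by fastforce
  qed
  have inj: "inj_on (\<lambda>T. T(r := Suc N)) (X r)" if r: "r \<in> remc U" for r
  proof (rule inj_onI)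
    fix T1 T2 assume t1: "T1 \<in> X r" and t2: "T2 \<in> X r" and e: "T1(r := Suc N) = T2(r := Suc N)"
    have "T1 r = 0" "T2 r = 0" using X[OF r] t1 t2 sytU_out unfolding Atab_def by blast+
    then show "T1 = T2" using e by (metis fun_upd_triv fun_upd_upd)
  qed
  have "card (\<Union>r\<in>remc U. (\<lambda>T. T(r := Suc N)) ` X r) = (\<Sum>r\<in>remc U. card ((\<lambda>T. T(r := Suc N)) ` X r))"
    by (rule card_UN_disjoint[OF finR]) (use X disj in auto)
  also have "\<dots> = (\<Sum>r\<in>remc U. card (X r))"
    using inj card_image by (metis (no_types, lifting) sum.cong)
  finally show "card (\<Union>r\<in>remc U. (\<lambda>T. T(r := Suc N)) ` X r) = (\<Sum>r\<in>remc U. card (X r))" .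
qed

lemma card_A:
  assumes "shape U"
  shows "finite (Atab U) \<and> card (Atab U) = Ch (card U) U {}"
  using assms
proof (induction "card U" arbitrary: U)
  case 0
  then have U: "U = {}" using shape_def by auto
  have "Atab U = {\<lambda>_. 0}" unfolding Atab_def sytU_def U by (auto simp: bij_betw_def)
  then show ?case using U by simp
next
  case (Suc N)
  have fin: "finite U" using Suc.prems shape_def by auto
  have X: "Atab (U - {r}) \<subseteq> Atab (U - {r}) \<and> finite (Atab (U - {r}))
           \<and> card (Atab (U - {r})) = Ch N (U - {r}) {}" if r: "r \<in> remc U" for r
  proof -
    have "card (U - {r}) = N" using card_remc_remove[OF r] Suc.hyps(2) by simp
    then show ?thesis using Suc.hyps(1)[of "U - {r}"] shape_remove[OF Suc.prems r] by simp
  qed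
  have "finite (Atab U) \<and> card (Atab U) = (\<Sum>r\<in>remc U. card (Atab (U - {r})))"
    unfolding A_peel[OF Suc.prems Suc.hyps(2)[symmetric]]
    by (rule card_union_peel[OF Suc.prems Suc.hyps(2)[symmetric]]) (use X in blast)
  then show ?case using X Suc.hyps(2)[symmetric] by simp
qed



definition col :: "nat \<Rightarrow> (nat \<times> nat) set" where
  "col p = {..<p} \<times> {0}"

lemma shape_col: "shape (col p)"
  unfolding shape_def col_def by (auto intro!: dcI)

lemma card_col: "card (col p) = p"
  unfolding col_def by (simp add: card_cartesian_product)

lemma remc_col_Suc: "remc (col (Suc p)) = {(p, 0)}"
proof (rule set_eqI)
  fix c :: "nat \<times> nat"
  obtain i j where c: "c = (i, j)" by fastforce
  have d: "dc (col (Suc p))" using shape_col shape_def by auto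
  show "c \<in> remc (col (Suc p)) \<longleftrightarrow> c \<in> {(p, 0)}"
  proof (cases "c \<in> col (Suc p)")
    case True
    then have "dc (col (Suc p) - {(i, j)}) \<longleftrightarrow> ((Suc i, j) \<notin> col (Suc p) \<and> (i, Suc j) \<notin> col (Suc p))"
      using dc_remove_iff[OF d] c by simp
    then show ?thesis using True c unfolding remc_def col_def by auto
  next
    case False
    then show ?thesis unfolding remc_def col_def by auto
  qed
qed

lemma remc_col_0: "remc (col 0) = {}"
  unfolding remc_def col_def by auto

lemma col_Suc_minus: "col (Suc p) - {(p, 0)} = col p"
  unfolding col_def by auto

lemma col_Suc_insert: "insert (p, 0) (col p) = col (Suc p)"
  unfolding col_def by auto

lemma Ch_col: "Ch p (col p) {} = 1"
proof (induction p)
  case 0 then show ?case by (simp add: col_def)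
next
  case (Suc p) then show ?case by (simp add: remc_col_Suc col_Suc_minus)
qed

lemma W_col: "W j (col p) = (if j \<le> p then 1 else 0)"
proof (induction j arbitrary: p)
  case 0 then show ?case by simp
next
  case (Suc j)
  show ?case
  proof (cases p)
    case 0 then show ?thesis by (simp add: remc_col_0)
  next
    case (Suc q) then show ?thesis by (simp add: remc_col_Suc col_Suc_minus Suc.IH)
  qed
qed

lemma addc_col:
  assumes "0 < p"
  shows "addc (col p) = {(p, 0), (0, 1)}"
proof (rule set_eqI)
  fix c :: "nat \<times> nat"
  obtain i j where c: "c = (i, j)" by fastforce
  have d: "dc (col p)" using shape_col shape_def by auto
  show "c \<in> addc (col p) \<longleftrightarrow> c \<in> {(p, 0), (0, 1)}"
    unfolding c addc_def using dc_insert_iff[OF d, of i j] assms unfolding col_def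
    by auto
qed

definition S0 :: "nat \<Rightarrow> (nat \<times> nat) set" where
  "S0 k = insert (0, 1) (col (k - 1))"

lemma S0_props:
  assumes "2 \<le> k"
  shows "shape (S0 k)" "card (S0 k) = k" "(0, 1) \<in> remc (S0 k)" "S0 k - {(0, 1)} = col (k - 1)"
proof -
  have d: "dc (col (k - 1))" using shape_col shape_def by auto
  have "(0, 0) \<in> col (k - 1)" using assms unfolding col_def by auto
  then have "dc (S0 k)" unfolding S0_def using dc_insert_iff[OF d, of 0 1] by simp
  moreover have "finite (S0 k)" unfolding S0_def using shape_col shape_def by auto
  ultimately show sh: "shape (S0 k)" using shape_def by auto
  have n: "(0, 1) \<notin> col (k - 1)" unfolding col_def by auto
  then show "card (S0 k) = k" unfolding S0_def using card_col[of "k - 1"] assms shape_col shape_def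
    by (simp add: card_insert_if)
  show e: "S0 k - {(0, 1)} = col (k - 1)" unfolding S0_def using n by auto
  show "(0, 1) \<in> remc (S0 k)" unfolding remc_def using e d by (simp add: S0_def)
qed

lemma col_char:
  assumes sh: "shape V" and n: "(0, 1) \<notin> V"
  shows "V = col (card V)"
proof -
  have dV: "dc V" using sh shape_def by auto
  have finV: "finite V" using sh shape_def by auto
  have j0: "j = 0" if "(i, j) \<in> V" for i j
  proof (rule ccontr)
    assume "j \<noteq> 0"
    then have "(0, 1) \<in> V" using dcD[OF dV that, of 0 1] by simp
    then show False using n by simp
  qed
  let ?I = "{i. (i, 0) \<in> V}"
  have VI: "V = ?I \<times> {0}" using j0 by auto
  have "?I = fst ` V" using VI by force
  then have finI: "finite ?I" using finV by simp
  have "?I = {..<card ?I}"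
    by (rule downclosed_nat[OF finI]) (use dcD[OF dV] in blast)
  moreover have "card V = card ?I" using arg_cong[OF VI, of card] by (simp add: card_cartesian_product)
  ultimately show ?thesis using VI unfolding col_def by simp
qed

definition Btab :: "nat \<Rightarrow> (nat \<times> nat) set \<Rightarrow> (nat \<times> nat \<Rightarrow> nat) set" where
  "Btab k U = {T \<in> Atab U. T (0, 1) = k}"

lemma Atab_val: "T \<in> Atab U \<Longrightarrow> T c \<le> card U"
  unfolding Atab_def using sytU_val sytU_out by (metis le0 mem_Collect_eq)

lemma B_peel:
  assumes sh: "shape U" and cU: "card U = Suc N" and k: "0 < k" "k \<le> N"
  shows "Btab k U = (\<Union>r\<in>remc U. (\<lambda>T. T(r := Suc N)) ` Btab k (U - {r}))"
proof (rule set_eqI, rule iffI)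
  fix T assume "T \<in> Btab k U"
  then have T: "T \<in> Atab U" "T (0, 1) = k" unfolding Btab_def by auto
  then obtain r T' where r: "r \<in> remc U" and T': "T' \<in> Atab (U - {r})" and e: "T = T'(r := Suc N)"
    using A_peel[OF sh cU] by blast
  have "r \<noteq> (0, 1)" using T(2) e k by auto
  then have "T' (0, 1) = k" using T(2) e by simp
  then show "T \<in> (\<Union>r\<in>remc U. (\<lambda>T. T(r := Suc N)) ` Btab k (U - {r}))"
    using r T' e unfolding Btab_def by blast
next
  fix T assume "T \<in> (\<Union>r\<in>remc U. (\<lambda>T. T(r := Suc N)) ` Btab k (U - {r}))"
  then obtain r T' where r: "r \<in> remc U" and T': "T' \<in> Atab (U - {r})" "T' (0, 1) = k"
    and e: "T = T'(r := Suc N)" unfolding Btab_def by blast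
  have "(0, 1) \<in> U - {r}" using T' k sytU_out unfolding Atab_def by fastforce
  then have "r \<noteq> (0, 1)" by auto
  then have "T (0, 1) = k" using e T' by simp
  moreover have "T \<in> Atab U" using A_peel[OF sh cU] r T' e by blast
  ultimately show "T \<in> Btab k U" unfolding Btab_def by simp
qed

lemma B_base:
  assumes sh: "shape U" and cU: "card U = Suc N"
  shows "Btab (Suc N) U = (\<Union>r\<in>remc U. (\<lambda>T. T(r := Suc N)) ` (if r = (0, 1) then Atab (U - {r}) else {}))"
proof (rule set_eqI, rule iffI)
  fix T assume "T \<in> Btab (Suc N) U"
  then have T: "T \<in> Atab U" "T (0, 1) = Suc N" unfolding Btab_def by auto
  then obtain r T' where r: "r \<in> remc U" and T': "T' \<in> Atab (U - {r})" and e: "T = T'(r := Suc N)"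
    using A_peel[OF sh cU] by blast
  have "r = (0, 1)"
  proof (rule ccontr)
    assume "r \<noteq> (0, 1)"
    then have "T' (0, 1) = Suc N" using T(2) e by simp
    moreover have "T' (0, 1) \<le> N" using Atab_val[OF T'] card_remc_remove[OF r] cU by fastforce
    ultimately show False by simp
  qed
  then show "T \<in> (\<Union>r\<in>remc U. (\<lambda>T. T(r := Suc N)) ` (if r = (0, 1) then Atab (U - {r}) else {}))"
    using r T' e by auto
next
  fix T assume "T \<in> (\<Union>r\<in>remc U. (\<lambda>T. T(r := Suc N)) ` (if r = (0, 1) then Atab (U - {r}) else {}))"
  then obtain r T' where r: "r \<in> remc U" "r = (0, 1)" and T': "T' \<in> Atab (U - {r})"
    and e: "T = T'(r := Suc N)" by (auto split: if_splits)
  have "T \<in> Atab U" using A_peel[OF sh cU] r T' e by blast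
  moreover have "T (0, 1) = Suc N" using e r by simp
  ultimately show "T \<in> Btab (Suc N) U" unfolding Btab_def by simp
qed

lemma card_B:
  assumes "shape U" "2 \<le> k" "k \<le> card U"
  shows "finite (Btab k U) \<and> card (Btab k U) = Ch (card U - k) U (S0 k)"
  using assms
proof (induction "card U" arbitrary: U)
  case 0 then show ?case by simp
next
  case (Suc N)
  note sh = Suc.prems(1)
  have cU: "card U = Suc N" using Suc.hyps(2) by simp
  have fin: "finite U" using sh shape_def by auto
  show ?case
  proof (cases "k = Suc N")
    case True
    let ?X = "\<lambda>r. if r = (0, 1) then Atab (U - {r}) else {}"
    have X: "?X r \<subseteq> Atab (U - {r}) \<and> finite (?X r)" if "r \<in> remc U" for r
      using card_A[OF shape_remove[OF sh that]] by auto
    have c1: "finite (Btab k U) \<and> card (Btab k U) = (\<Sum>r\<in>remc U. card (?X r))"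
      unfolding True B_base[OF sh cU] by (rule card_union_peel[OF sh cU X])
    have "(\<Sum>r\<in>remc U. card (?X r)) = (\<Sum>r\<in>remc U. if r = (0, 1) then card (Atab (U - {(0, 1)})) else 0)"
      by (rule sum.cong) auto
    also have "\<dots> = (if (0, 1) \<in> remc U then card (Atab (U - {(0, 1)})) else 0)"
      using finite_remc[OF sh] by (simp add: sum.delta)
    also have "\<dots> = Ch (card U - k) U (S0 k)"
    proof (cases "(0, 1) \<in> remc U")
      case True
      let ?V = "U - {(0, 1)}"
      have shV: "shape ?V" using shape_remove[OF sh True] .
      have cV: "card ?V = k - 1" using card_remc_remove[OF True] cU \<open>k = Suc N\<close> by simp
      have V: "?V = col (k - 1)" using col_char[OF shV] cV by simp
      have "(0, 1) \<in> U" using True remc_sub by blast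
      then have "U = S0 k" unfolding S0_def using V by auto
      then show ?thesis using True card_A[OF shV] V Ch_col[of "k - 1"] card_col[of "k - 1"] cU \<open>k = Suc N\<close> by simp
    next
      case False
      then have "U \<noteq> S0 k" using S0_props(3)[OF Suc.prems(2)] by auto
      then show ?thesis using False cU \<open>k = Suc N\<close> by simp
    qed
    finally show ?thesis using c1 by simp
  next
    case False
    then have kN: "k \<le> N" using Suc.prems(3) cU by simp
    have k0: "0 < k" using Suc.prems(2) by simp
    have X: "Btab k (U - {r}) \<subseteq> Atab (U - {r}) \<and> finite (Btab k (U - {r}))
        \<and> card (Btab k (U - {r})) = Ch (N - k) (U - {r}) (S0 k)" if r: "r \<in> remc U" for r
    proof -
      have c: "card (U - {r}) = N" using card_remc_remove[OF r] cU by simp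
      show ?thesis using Suc.hyps(1)[of "U - {r}"] c shape_remove[OF sh r] Suc.prems(2) kN
        unfolding Btab_def by auto
    qed
    have "finite (Btab k U) \<and> card (Btab k U) = (\<Sum>r\<in>remc U. card (Btab k (U - {r})))"
      unfolding B_peel[OF sh cU k0 kN]
      by (rule card_union_peel[OF sh cU]) (use X in blast)
    moreover have "card U - k = Suc (N - k)" using kN cU by simp
    ultimately show ?thesis using X by simp
  qed
qed



definition Cs :: "nat \<Rightarrow> nat \<Rightarrow> nat" where
  "Cs p N = (\<Sum>j\<le>p. cc N j)"

lemma Eup_col: "Eup N (col p) = Cs p N"
proof -
  have "Eup N (col p) = (\<Sum>j\<le>N + p. cc N j * W j (col p))"
    by (rule Eformula[OF shape_col]) simp
  also have "\<dots> = (\<Sum>j\<in>{..N + p}. if j \<le> p then cc N j else 0)"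
    by (rule sum.cong) (auto simp: W_col)
  also have "\<dots> = (\<Sum>j\<in>{x\<in>{..N + p}. x \<le> p}. cc N j)"
    by (rule sum.inter_filter[symmetric]) simp
  also have "{x\<in>{..N + p}. x \<le> p} = {..p}" by auto
  finally show ?thesis unfolding Cs_def .
qed

lemma Eup_S0:
  assumes "2 \<le> k"
  shows "Eup (Suc N) (col (k - 1)) = Eup N (col k) + Eup N (S0 k)"
proof -
  have "addc (col (k - 1)) = {(k - 1, 0), (0, 1)}" using addc_col[of "k - 1"] assms by simp
  moreover have "(k - 1, 0) \<noteq> (0::nat, 1::nat)" by simp
  moreover have "insert (k - 1, 0) (col (k - 1)) = col k" using col_Suc_insert[of "k - 1"] assms by simp
  ultimately show ?thesis unfolding S0_def by simp
qed

lemma cells_card: "card (cells lam) = sum_list lam"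
proof -
  have e: "cells lam = (\<Union>i\<in>{..<length lam}. {i} \<times> {..<lam ! i})"
    unfolding cells_def by auto
  have "card (\<Union>i\<in>{..<length lam}. {i} \<times> {..<lam ! i}) = (\<Sum>i\<in>{..<length lam}. card ({i} \<times> {..<lam ! i}))"
    by (rule card_UN_disjoint) auto
  also have "\<dots> = (\<Sum>i\<in>{..<length lam}. lam ! i)" by (simp add: card_cartesian_product)
  also have "\<dots> = sum_list lam" by (simp add: sum_list_sum_nth atLeast0LessThan)
  finally show ?thesis using e by simp
qed

lemma partition_shape:
  assumes "is_partition lam"
  shows "shape (cells lam)"
proof -
  have fin: "finite (cells lam)"
  proof -
    have "cells lam = (\<Union>i\<in>{..<length lam}. {i} \<times> {..<lam ! i})"
      unfolding cells_def by auto
    then show ?thesis by simp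
  qed
  have srt: "sorted_wrt (\<ge>) lam" using assms is_partition_def by auto
  have "dc (cells lam)"
  proof (rule dcI)
    fix i j i' j'
    assume m: "(i, j) \<in> cells lam" "i' \<le> i" "j' \<le> j"
    then have il: "i < length lam" and jl: "j < lam ! i" unfolding cells_def by auto
    have "lam ! i \<le> lam ! i'"
    proof (cases "i' = i")
      case True then show ?thesis by simp
    next
      case False
      then have "i' < i" using m by simp
      then show ?thesis using sorted_wrt_nth_less[OF srt _ il] by simp
    qed
    then show "(i', j') \<in> cells lam" using m il jl unfolding cells_def by auto
  qed
  then show ?thesis using fin shape_def by auto
qed

lemma shape_partition:
  assumes sh: "shape U"
  shows "\<exists>lam. is_partition lam \<and> cells lam = U"
proof -
  have finU: "finite U" and dU: "dc U" using sh shape_def by auto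
  let ?I = "{i. (i, 0) \<in> U}"
  define R where "R = card ?I"
  have "?I \<subseteq> fst ` U" by force
  then have finI: "finite ?I" using finU by (meson finite_imageI finite_subset)
  have I: "?I = {..<R}" unfolding R_def
    by (rule downclosed_nat[OF finI]) (use dcD[OF dU] in blast)
  define lam where "lam = map (len U) [0..<R]"
  have cl: "cells lam = U"
  proof (rule set_eqI)
    fix c :: "nat \<times> nat"
    obtain i j where c: "c = (i, j)" by fastforce
    have "(i, j) \<in> U \<longleftrightarrow> i < R \<and> j < len U i"
    proof
      assume h: "(i, j) \<in> U"
      then have "(i, 0) \<in> U" using dcD[OF dU h, of i 0] by simp
      then have "i < R" using I by auto
      then show "i < R \<and> j < len U i" using h rowchar[OF sh] by auto
    qed (use rowchar[OF sh] in auto)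
    then show "c \<in> cells lam \<longleftrightarrow> c \<in> U" unfolding c cells_def lam_def by auto
  qed
  have "sorted_wrt (\<ge>) lam"
    unfolding lam_def sorted_wrt_map
    by (rule sorted_wrt_mono_rel[OF _ sorted_wrt_upt]) (use len_antimono[OF sh] in auto)
  moreover have "\<forall>x\<in>set lam. 0 < x"
  proof
    fix x assume "x \<in> set lam"
    then obtain i where "i < R" "x = len U i" unfolding lam_def by auto
    then show "0 < x" using I rowchar[OF sh, of i 0] by auto
  qed
  ultimately show ?thesis using cl is_partition_def by blast
qed

lemma Btab_shape:
  assumes "T \<in> Btab k U"
  shows "U = {c. T c \<noteq> 0}"
  using assms sytU_val sytU_out unfolding Btab_def Atab_def
  by (metis (mono_tags, lifting) Collect_cong Collect_mem_eq mem_Collect_eq not_one_le_zero)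

lemma f_count_eq:
  assumes "2 \<le> k" "k \<le> n"
  shows "f_count n k = Eup (n - k) (S0 k)"
proof -
  let ?L = "{T. \<exists>lam. syt lam T \<and> sum_list lam = n \<and> lam \<noteq> [] \<and> lam ! 0 > 1 \<and> T (0, 1) = k}"
  have L: "?L = (\<Union>U\<in>shapes n. Btab k U)"
  proof (rule set_eqI, rule iffI)
    fix T assume "T \<in> ?L"
    then obtain lam where s: "syt lam T" and n: "sum_list lam = n" and k: "T (0, 1) = k" by blast
    have part: "is_partition lam" using s syt_def by auto
    have "sytU (cells lam) T" using s unfolding syt_def sytU_def cells_card by blast
    then have "T \<in> Btab k (cells lam)" using k unfolding Btab_def Atab_def by simp
    moreover have "cells lam \<in> shapes n" unfolding shapes_def using partition_shape[OF part] cells_card n by simp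
    ultimately show "T \<in> (\<Union>U\<in>shapes n. Btab k U)" by blast
  next
    fix T assume "T \<in> (\<Union>U\<in>shapes n. Btab k U)"
    then obtain U where U: "U \<in> shapes n" and T: "T \<in> Btab k U" by blast
    have sh: "shape U" and cU: "card U = n" using U shapes_def by auto
    obtain lam where part: "is_partition lam" and cl: "cells lam = U" using shape_partition[OF sh] by blast
    have st: "sytU U T" and k: "T (0, 1) = k" using T unfolding Btab_def Atab_def by auto
    have "syt lam T" using st part cl cells_card[of lam] unfolding syt_def sytU_def by simp
    moreover have "sum_list lam = n" using cl cells_card[of lam] cU by simp
    moreover have "(0, 1) \<in> U" using k assms sytU_out[OF st] by fastforce
    then have "lam \<noteq> [] \<and> lam ! 0 > 1" using cl unfolding cells_def by auto
    ultimately show "T \<in> ?L" using k by blast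
  qed
  have "card (\<Union>U\<in>shapes n. Btab k U) = (\<Sum>U\<in>shapes n. card (Btab k U))"
  proof (rule card_UN_disjoint[OF finite_shapes])
    show "\<forall>U\<in>shapes n. finite (Btab k U)" using card_B assms unfolding shapes_def by auto
    show "\<forall>U\<in>shapes n. \<forall>V\<in>shapes n. U \<noteq> V \<longrightarrow> Btab k U \<inter> Btab k V = {}"
      using Btab_shape by blast
  qed
  also have "\<dots> = (\<Sum>U\<in>shapes n. Ch (n - k) U (S0 k))"
    by (rule sum.cong) (use card_B assms in \<open>auto simp: shapes_def\<close>)
  also have "\<dots> = Eup (n - k) (S0 k)"
    using Eup_Ch[OF S0_props(1)[OF assms(1)], of "n - k"] S0_props(2)[OF assms(1)] assms by simp
  finally show ?thesis unfolding f_count_def L .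
qed

lemma f_count_Cs:
  assumes "2 \<le> k" "k \<le> n"
  shows "f_count n k = Cs (k - 1) (Suc (n - k)) - Cs k (n - k)"
  using f_count_eq[OF assms] Eup_S0[OF assms(1), of "n - k"] Eup_col by simp



definition invs :: "nat set \<Rightarrow> (nat \<Rightarrow> nat) \<Rightarrow> bool" where
  "invs A w \<longleftrightarrow> (\<forall>x. x \<notin> A \<longrightarrow> w x = x) \<and> (\<forall>x. w (w x) = x)"

definition Gs :: "nat set \<Rightarrow> nat set \<Rightarrow> (nat \<Rightarrow> nat) set" where
  "Gs P R = {w. invs (P \<union> R) w \<and> (\<forall>a\<in>P. \<forall>b\<in>P. a < b \<longrightarrow> w a < w b)}"

lemma invs_maps: "invs A w \<Longrightarrow> x \<in> A \<Longrightarrow> w x \<in> A"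
  unfolding invs_def by metis

lemma invs_permutes: "invs A w \<Longrightarrow> w permutes A"
  unfolding invs_def permutes_def by metis

lemma finite_Gs: "finite P \<Longrightarrow> finite R \<Longrightarrow> finite (Gs P R)"
proof -
  assume "finite P" "finite R"
  then have "finite {w. w permutes (P \<union> R)}" by (simp add: finite_permutations)
  moreover have "Gs P R \<subseteq> {w. w permutes (P \<union> R)}" unfolding Gs_def using invs_permutes by blast
  ultimately show ?thesis by (rule finite_subset[rotated])
qed

lemma unpair:
  assumes "invs A w" "w t = i" "t \<noteq> i"
  shows "invs (A - {t, i}) (w(t := t, i := i)) \<and> w = (w(t := t, i := i))(t := i, i := t)"
proof -
  have wi: "w i = t" using assms unfolding invs_def by metis
  have inv: "w (w x) = x" for x using assms unfolding invs_def by blast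
  have "invs (A - {t, i}) (w(t := t, i := i))"
    unfolding invs_def
  proof (intro conjI allI impI)
    fix x assume "x \<notin> A - {t, i}"
    then show "(w(t := t, i := i)) x = x" using assms(1) unfolding invs_def by auto
  next
    fix x
    show "(w(t := t, i := i)) ((w(t := t, i := i)) x) = x"
    proof (cases "x = t \<or> x = i")
      case True then show ?thesis by auto
    next
      case False
      then have "w x \<noteq> t" "w x \<noteq> i" using inv[of x] assms(2) wi by metis+
      then show ?thesis using False inv[of x] by simp
    qed
  qed
  moreover have "w = (w(t := t, i := i))(t := i, i := t)"
    using assms(2) wi by (auto simp: fun_eq_iff)
  ultimately show ?thesis by blast
qed

lemma pair:
  assumes "invs (A - {t, i}) w" "t \<noteq> i" "t \<in> A" "i \<in> A"
  shows "invs A (w(t := i, i := t))"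
  unfolding invs_def
proof (intro conjI allI impI)
  have wt: "w t = t" "w i = i" using assms(1) unfolding invs_def by auto
  have inv: "w (w x) = x" for x using assms(1) unfolding invs_def by blast
  fix x
  show "(w(t := i, i := t)) ((w(t := i, i := t)) x) = x"
  proof (cases "x = t \<or> x = i")
    case True then show ?thesis using assms(2) by auto
  next
    case False
    then have "w x \<noteq> t" "w x \<noteq> i" using inv[of x] wt by metis+
    then show ?thesis using False inv[of x] by simp
  qed
next
  fix x assume "x \<notin> A"
  then show "(w(t := i, i := t)) x = x" using assms unfolding invs_def by auto
qed

lemma pair_inj:
  assumes "\<And>w. w \<in> X \<Longrightarrow> w t = t \<and> w i = i"
  shows "inj_on (\<lambda>w. w(t := i, i := t)) X"
proof (rule inj_onI)
  fix w1 w2 assume "w1 \<in> X" "w2 \<in> X" "w1(t := i, i := t) = w2(t := i, i := t)"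
  then show "w1 = w2" using assms by (metis fun_upd_triv fun_upd_upd fun_upd_twist)
qed

lemma card_fibers:
  assumes "finite X" "finite Y" "f ` X \<subseteq> Y"
  shows "card X = (\<Sum>v\<in>Y. card {x\<in>X. f x = v})"
proof -
  have "X = (\<Union>v\<in>Y. {x\<in>X. f x = v})" using assms(3) by auto
  moreover have "card (\<Union>v\<in>Y. {x\<in>X. f x = v}) = (\<Sum>v\<in>Y. card {x\<in>X. f x = v})"
    by (rule card_UN_disjoint) (use assms in auto)
  ultimately show ?thesis by simp
qed

lemma Cs_0: "Cs p 0 = 1"
  unfolding Cs_def by (simp add: sum.delta)

lemma Cs_Suc: "Cs p (Suc r) = Cs p r + r * Cs p (r - 1) + (if p = 0 then 0 else Cs (p - 1) r)"
proof -
  have "Cs p (Suc r) = (\<Sum>j\<le>p. (if j = 0 then 0 else cc r (j - 1))) + Cs p r + r * Cs p (r - 1)"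
    unfolding Cs_def by (simp add: cc_Suc sum.distrib sum_distrib_left)
  moreover have "(\<Sum>j\<le>p. (if j = 0 then 0 else cc r (j - 1))) = (if p = 0 then 0 else Cs (p - 1) r)"
  proof (cases p)
    case 0 then show ?thesis by simp
  next
    case (Suc q) then show ?thesis unfolding Cs_def Suc sum.atMost_Suc_shift by simp
  qed
  ultimately show ?thesis by simp
qed

lemma Gs_empty_fix:
  assumes "finite P" "P \<noteq> {}" "w \<in> Gs P {}"
  shows "w (Max P) = Max P"
proof (rule ccontr)
  let ?t = "Max P"
  assume ne: "w ?t \<noteq> ?t"
  have tP: "?t \<in> P" using assms by simp
  have inv: "invs P w" and inc: "\<forall>a\<in>P. \<forall>b\<in>P. a < b \<longrightarrow> w a < w b" using assms(3) unfolding Gs_def by auto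
  have wt: "w ?t \<in> P" using invs_maps[OF inv tP] .
  then have "w ?t < ?t" using ne assms(1) by (simp add: le_neq_trans)
  then have "w (w ?t) < w ?t" using inc wt tP by blast
  then show False using inv \<open>w ?t < ?t\<close> unfolding invs_def by simp
qed

lemma card_Gs_empty:
  assumes "finite P"
  shows "card (Gs P {}) = 1"
  using assms
proof (induction "card P" arbitrary: P)
  case 0
  then have "P = {}" by simp
  moreover have "Gs {} {} = {id}" unfolding Gs_def invs_def by auto
  ultimately show ?case by simp
next
  case (Suc n)
  let ?t = "Max P"
  have ne: "P \<noteq> {}" using Suc.hyps(2) by auto
  have tP: "?t \<in> P" using Suc.prems ne by simp
  have "Gs P {} = Gs (P - {?t}) {}"
  proof (rule set_eqI, rule iffI)
    fix w assume w: "w \<in> Gs P {}"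
    have wt: "w ?t = ?t" using Gs_empty_fix[OF Suc.prems ne w] .
    then show "w \<in> Gs (P - {?t}) {}" using w unfolding Gs_def invs_def by auto
  next
    fix w assume w: "w \<in> Gs (P - {?t}) {}"
    have inv: "invs (P - {?t}) w" and inc: "\<forall>a\<in>P - {?t}. \<forall>b\<in>P - {?t}. a < b \<longrightarrow> w a < w b"
      using w unfolding Gs_def by auto
    have wt: "w ?t = ?t" using inv unfolding invs_def by auto
    have inv2: "invs P w" using inv unfolding invs_def by auto
    have "w a < w b" if a: "a \<in> P" and b: "b \<in> P" and ab: "a < b" for a b
    proof -
      have bt: "b \<le> ?t" using b Suc.prems by simp
      then have at: "a \<noteq> ?t" using ab by simp
      show ?thesis
      proof (cases "b = ?t")
        case True
        have "w a \<in> P - {?t}" using invs_maps[OF inv, of a] a at by simp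
        then have "w a < ?t" using Suc.prems by (simp add: le_neq_trans)
        then show ?thesis using True wt by simp
      next
        case False
        then show ?thesis using inc a b at ab by blast
      qed
    qed
    then show "w \<in> Gs P {}" using inv2 unfolding Gs_def by auto
  qed
  moreover have "card (Gs (P - {?t}) {}) = 1"
    using Suc.hyps(1)[of "P - {?t}"] Suc.hyps(2) Suc.prems tP by simp
  ultimately show ?case by simp
qed



lemma card_Gs:
  assumes "finite P" "finite R" "\<forall>a\<in>P. \<forall>b\<in>R. a < b"
  shows "card (Gs P R) = Cs (card P) (card R)"
  using assms
proof (induction "card R" arbitrary: P R rule: less_induct)
  case less
  note finP = less.prems(1) and finR = less.prems(2) and lt = less.prems(3)
  show ?case
  proof (cases "R = {}")
    case True
    then show ?thesis using card_Gs_empty[OF finP] Cs_0 by simp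
  next
    case Rne: False
    define t where "t = Max R"
    have tR: "t \<in> R" using Rne finR t_def by simp
    have tP: "t \<notin> P" using lt tR by blast
    have le_t: "x \<le> t" if "x \<in> P \<union> R" for x
    proof (cases "x \<in> R")
      case True then show ?thesis using finR t_def by simp
    next
      case False then have "x \<in> P" using that by simp
      then show ?thesis using lt tR by fastforce
    qed
    obtain r' where cR: "card R = Suc r'" using Rne finR by (cases "card R") auto
    have cRt: "card (R - {t}) = r'" using cR tR by simp
    have disjPR: "P \<inter> R = {}" using lt by blast
    have fin: "finite (Gs P R)" using finite_Gs[OF finP finR] .
    have maps: "(\<lambda>w. w t) ` Gs P R \<subseteq> P \<union> R"
      unfolding Gs_def using invs_maps tR by blast
    have "card (Gs P R) = (\<Sum>v\<in>P \<union> R. card {w\<in>Gs P R. w t = v})"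
      by (rule card_fibers[OF fin _ maps]) (use finP finR in simp)
    also have "\<dots> = (\<Sum>v\<in>P. card {w\<in>Gs P R. w t = v}) + (\<Sum>v\<in>R. card {w\<in>Gs P R. w t = v})"
      by (rule sum.union_disjoint[OF finP finR disjPR])
    also have "(\<Sum>v\<in>R. card {w\<in>Gs P R. w t = v}) = card {w\<in>Gs P R. w t = t} + (\<Sum>v\<in>R - {t}. card {w\<in>Gs P R. w t = v})"
      by (rule sum.remove[OF finR tR])
    also have "{w\<in>Gs P R. w t = t} = Gs P (R - {t})"
    proof (rule set_eqI, rule iffI)
      fix w assume "w \<in> {w\<in>Gs P R. w t = t}"
      then show "w \<in> Gs P (R - {t})" unfolding Gs_def invs_def by auto
    next
      fix w assume "w \<in> Gs P (R - {t})"
      then show "w \<in> {w\<in>Gs P R. w t = t}" using tP unfolding Gs_def invs_def by auto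
    qed
    also have "card (Gs P (R - {t})) = Cs (card P) r'"
      using less.hyps[of "R - {t}" P] cRt cR finP finR lt by simp
    also have "(\<Sum>v\<in>R - {t}. card {w\<in>Gs P R. w t = v}) = (\<Sum>v\<in>R - {t}. Cs (card P) (r' - 1))"
    proof (rule sum.cong[OF refl])
      fix v assume v: "v \<in> R - {t}"
      have vP: "v \<notin> P" using lt v by blast
      let ?phi = "\<lambda>w. w(t := v, v := t)"
      have eqA: "(P \<union> R) - {t, v} = P \<union> (R - {t, v})" using tP vP by auto
      have X: "{w\<in>Gs P R. w t = v} = ?phi ` Gs P (R - {t, v})"
      proof (rule set_eqI, rule iffI)
        fix w assume w: "w \<in> {w\<in>Gs P R. w t = v}"
        then have inv: "invs (P \<union> R) w" and inc: "\<forall>a\<in>P. \<forall>b\<in>P. a < b \<longrightarrow> w a < w b" and wt: "w t = v"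
          unfolding Gs_def by auto
        have ne: "t \<noteq> v" using v by simp
        obtain U where U: "invs ((P \<union> R) - {t, v}) (w(t := t, v := v))" and e: "w = (w(t := t, v := v))(t := v, v := t)"
          using unpair[OF inv wt ne] by blast
        have "w(t := t, v := v) \<in> Gs P (R - {t, v})"
          unfolding Gs_def using U eqA inc tP vP by auto
        then show "w \<in> ?phi ` Gs P (R - {t, v})" using e by blast
      next
        fix w assume "w \<in> ?phi ` Gs P (R - {t, v})"
        then obtain w' where w': "w' \<in> Gs P (R - {t, v})" and e: "w = ?phi w'" by blast
        have inv: "invs (P \<union> (R - {t, v})) w'" and inc: "\<forall>a\<in>P. \<forall>b\<in>P. a < b \<longrightarrow> w' a < w' b"
          using w' unfolding Gs_def by auto
        have ne: "t \<noteq> v" using v by simp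
        have "invs (P \<union> R) (?phi w')" using pair[of "P \<union> R" t v w'] inv eqA ne tR v by auto
        moreover have "\<forall>a\<in>P. \<forall>b\<in>P. a < b \<longrightarrow> ?phi w' a < ?phi w' b" using inc tP vP by auto
        moreover have "?phi w' t = v" using ne by simp
        ultimately show "w \<in> {w\<in>Gs P R. w t = v}" using e unfolding Gs_def by auto
      qed
      have inj: "inj_on ?phi (Gs P (R - {t, v}))"
        by (rule pair_inj) (use tP vP in \<open>auto simp: Gs_def invs_def\<close>)
      have "R - {t, v} \<subset> R" using tR by auto
      then have "card (R - {t, v}) < card R" by (rule psubset_card_mono[OF finR])
      moreover have "card (R - {t, v}) = r' - 1" using cR v tR finR by (simp add: card_Diff_subset)
      ultimately have "card (Gs P (R - {t, v})) = Cs (card P) (r' - 1)"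
        using less.hyps[of "R - {t, v}" P] finP finR lt by simp
      then show "card {w\<in>Gs P R. w t = v} = Cs (card P) (r' - 1)"
        using X card_image[OF inj] by simp
    qed
    also have "\<dots> = r' * Cs (card P) (r' - 1)" using cRt by simp
    also have "(\<Sum>v\<in>P. card {w\<in>Gs P R. w t = v}) = (if card P = 0 then 0 else Cs (card P - 1) r')"
    proof (cases "P = {}")
      case True then show ?thesis by simp
    next
      case Pne: False
      define s where "s = Max P"
      have sP: "s \<in> P" using Pne finP s_def by simp
      have st: "s \<noteq> t" using sP tP by auto
      have zero: "{w\<in>Gs P R. w t = v} = {}" if v: "v \<in> P" "v \<noteq> s" for v
      proof (rule ccontr)
        assume "{w\<in>Gs P R. w t = v} \<noteq> {}"
        then obtain w where w: "w \<in> Gs P R" "w t = v" by blast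
        then have inv: "invs (P \<union> R) w" and inc: "\<forall>a\<in>P. \<forall>b\<in>P. a < b \<longrightarrow> w a < w b"
          unfolding Gs_def by auto
        have "v < s" using v finP s_def by (simp add: le_neq_trans)
        then have "w v < w s" using inc v sP by blast
        moreover have "w (w t) = t" using inv unfolding invs_def by blast
        then have "w v = t" using w(2) by simp
        moreover have "w s \<le> t" using le_t invs_maps[OF inv, of s] sP by blast
        ultimately show False by simp
      qed
      let ?phi = "\<lambda>w. w(t := s, s := t)"
      have eqA: "(P \<union> R) - {t, s} = (P - {s}) \<union> (R - {t})" using tP sP disjPR by auto
      have X: "{w\<in>Gs P R. w t = s} = ?phi ` Gs (P - {s}) (R - {t})"
      proof (rule set_eqI, rule iffI)
        fix w assume w: "w \<in> {w\<in>Gs P R. w t = s}"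
        then have inv: "invs (P \<union> R) w" and inc: "\<forall>a\<in>P. \<forall>b\<in>P. a < b \<longrightarrow> w a < w b" and wt: "w t = s"
          unfolding Gs_def by auto
        have ne: "t \<noteq> s" using st by simp
        obtain U where U: "invs ((P \<union> R) - {t, s}) (w(t := t, s := s))" and e: "w = (w(t := t, s := s))(t := s, s := t)"
          using unpair[OF inv wt ne] by blast
        have "w(t := t, s := s) \<in> Gs (P - {s}) (R - {t})"
          unfolding Gs_def using U eqA inc tP by auto
        then show "w \<in> ?phi ` Gs (P - {s}) (R - {t})" using e by blast
      next
        fix w assume "w \<in> ?phi ` Gs (P - {s}) (R - {t})"
        then obtain w' where w': "w' \<in> Gs (P - {s}) (R - {t})" and e: "w = ?phi w'" by blast
        have inv: "invs ((P - {s}) \<union> (R - {t})) w'" and inc: "\<forall>a\<in>P - {s}. \<forall>b\<in>P - {s}. a < b \<longrightarrow> w' a < w' b"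
          using w' unfolding Gs_def by auto
        have ne: "t \<noteq> s" using st by simp
        have "invs (P \<union> R) (?phi w')" using pair[of "P \<union> R" t s w'] inv eqA ne tR sP by auto
        moreover have "?phi w' a < ?phi w' b" if a: "a \<in> P" and b: "b \<in> P" and ab: "a < b" for a b
        proof -
          have "b \<le> s" using b finP s_def by simp
          then have as: "a \<noteq> s" using ab by simp
          have at: "a \<noteq> t" using a tP by auto
          show ?thesis
          proof (cases "b = s")
            case True
            have "w' a \<in> (P - {s}) \<union> (R - {t})" using invs_maps[OF inv, of a] a as by simp
            then have "w' a \<le> t" "w' a \<noteq> t" using le_t tP by auto
            then have "w' a < t" by simp
            then show ?thesis using True as at st by simp
          next
            case False
            have "b \<noteq> t" using b tP by auto
            then show ?thesis using False as at inc a b ab by simp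
          qed
        qed
        moreover have "?phi w' t = s" using ne by simp
        ultimately show "w \<in> {w\<in>Gs P R. w t = s}" using e unfolding Gs_def by auto
      qed
      have inj: "inj_on ?phi (Gs (P - {s}) (R - {t}))"
        by (rule pair_inj) (use tP sP disjPR in \<open>auto simp: Gs_def invs_def\<close>)
      have cG: "card (Gs (P - {s}) (R - {t})) = Cs (card P - 1) r'"
        using less.hyps[of "R - {t}" "P - {s}"] finP finR lt cRt cR sP by simp
      have "(\<Sum>v\<in>P. card {w\<in>Gs P R. w t = v}) = (\<Sum>v\<in>P. if v = s then card {w\<in>Gs P R. w t = s} else 0)"
      proof (rule sum.cong[OF refl])
        fix v assume "v \<in> P"
        then show "card {w\<in>Gs P R. w t = v} = (if v = s then card {w\<in>Gs P R. w t = s} else 0)"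
        proof (cases "v = s")
          case False
          then have e: "{w\<in>Gs P R. w t = v} = {}" using zero[of v] \<open>v \<in> P\<close> by blast
          show ?thesis unfolding e using False by simp
        qed simp
      qed
      also have "\<dots> = card {w\<in>Gs P R. w t = s}" using finP sP by (simp add: sum.delta)
      also have "\<dots> = Cs (card P - 1) r'" using X card_image[OF inj] cG by simp
      finally show ?thesis using Pne finP by simp
    qed
    finally show ?thesis using Cs_Suc[of "card P" r'] cR by simp
  qed
qed

lemma invol_iff: "involution_on n w \<longleftrightarrow> invs {1..n} w"
proof
  assume h: "involution_on n w"
  then have p: "w permutes {1..n}" and c: "w \<circ> w = id" unfolding involution_on_def by auto
  have "\<forall>x. w (w x) = x" using fun_cong[OF c] by simp
  moreover have "\<forall>x. x \<notin> {1..n} \<longrightarrow> w x = x" using permutes_not_in[OF p] by simp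
  ultimately show "invs {1..n} w" unfolding invs_def by blast
next
  assume h: "invs {1..n} w"
  then have "w permutes {1..n}" by (rule invs_permutes)
  moreover have "w \<circ> w = id" using h unfolding invs_def by (auto simp: fun_eq_iff)
  ultimately show "involution_on n w" unfolding involution_on_def by simp
qed

lemma F_eq:
  assumes "1 \<le> m" "m < n"
  shows "F_set n m = Gs {1..m} {m + 1..n} - Gs {1..Suc m} {m + 2..n}"
proof (rule set_eqI)
  fix w
  have U1: "{1..m} \<union> {m + 1..n} = {1..n}" using assms by auto
  have U2: "{1..Suc m} \<union> {m + 2..n} = {1..n}" using assms by auto
  show "w \<in> F_set n m \<longleftrightarrow> w \<in> Gs {1..m} {m + 1..n} - Gs {1..Suc m} {m + 2..n}"
  proof (cases "invs {1..n} w")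
    case False
    then show ?thesis unfolding F_set_def Gs_def U1 U2 invol_iff by auto
  next
    case True
    have c: "w \<circ> w = id" using True unfolding invs_def by (auto simp: fun_eq_iff)
    have iw: "inv w = w" using inv_unique_comp[OF c c] .
    have ne: "w m \<noteq> w (Suc m)"
    proof
      assume "w m = w (Suc m)"
      then have "w (w m) = w (w (Suc m))" by simp
      then show False using True unfolding invs_def by simp
    qed
    have A: "(\<forall>a b. 1 \<le> a \<and> a < b \<and> b \<le> m \<longrightarrow> w a < w b) \<longleftrightarrow> (\<forall>a\<in>{1..m}. \<forall>b\<in>{1..m}. a < b \<longrightarrow> w a < w b)"
      by auto
    have B: "(\<forall>a\<in>{1..Suc m}. \<forall>b\<in>{1..Suc m}. a < b \<longrightarrow> w a < w b) \<longleftrightarrow>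
             (\<forall>a\<in>{1..m}. \<forall>b\<in>{1..m}. a < b \<longrightarrow> w a < w b) \<and> w m < w (Suc m)"
    proof
      assume h: "\<forall>a\<in>{1..Suc m}. \<forall>b\<in>{1..Suc m}. a < b \<longrightarrow> w a < w b"
      then show "(\<forall>a\<in>{1..m}. \<forall>b\<in>{1..m}. a < b \<longrightarrow> w a < w b) \<and> w m < w (Suc m)"
        using assms(1) by auto
    next
      assume h: "(\<forall>a\<in>{1..m}. \<forall>b\<in>{1..m}. a < b \<longrightarrow> w a < w b) \<and> w m < w (Suc m)"
      show "\<forall>a\<in>{1..Suc m}. \<forall>b\<in>{1..Suc m}. a < b \<longrightarrow> w a < w b"
      proof (intro ballI impI)
        fix a b assume a: "a \<in> {1..Suc m}" and b: "b \<in> {1..Suc m}" and ab: "a < b"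
        show "w a < w b"
        proof (cases "b = Suc m")
          case True
          show ?thesis
          proof (cases "a = m")
            case True then show ?thesis using h \<open>b = Suc m\<close> by simp
          next
            case False
            then have "a \<in> {1..m}" "a < m" using a ab True by auto
            then have "w a < w m" using h assms(1) by auto
            then show ?thesis using h True by simp
          qed
        next
          case False
          then show ?thesis using h a b ab by auto
        qed
      qed
    qed
    have "w \<in> F_set n m \<longleftrightarrow> (\<forall>a\<in>{1..m}. \<forall>b\<in>{1..m}. a < b \<longrightarrow> w a < w b) \<and> w (Suc m) < w m"
      unfolding F_set_def using True iw A invol_iff by simp
    also have "\<dots> \<longleftrightarrow> (\<forall>a\<in>{1..m}. \<forall>b\<in>{1..m}. a < b \<longrightarrow> w a < w b) \<and> \<not> w m < w (Suc m)"
      using ne by auto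
    also have "\<dots> \<longleftrightarrow> w \<in> Gs {1..m} {m + 1..n} - Gs {1..Suc m} {m + 2..n}"
      unfolding Gs_def U1 U2 using True B by auto
    finally show ?thesis .
  qed
qed

lemma card_F:
  assumes "1 \<le> m" "m < n"
  shows "card (F_set n m) = Cs m (n - m) - Cs (Suc m) (n - Suc m)"
proof -
  have sub: "Gs {1..Suc m} {m + 2..n} \<subseteq> Gs {1..m} {m + 1..n}"
  proof -
    have "{1..m} \<union> {m + 1..n} = {1..Suc m} \<union> {m + 2..n}" using assms by auto
    then show ?thesis unfolding Gs_def by auto
  qed
  have "card (F_set n m) = card (Gs {1..m} {m + 1..n}) - card (Gs {1..Suc m} {m + 2..n})"
    unfolding F_eq[OF assms] by (rule card_Diff_subset[OF finite_Gs sub]) simp_all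
  moreover have "card (Gs {1..m} {m + 1..n}) = Cs m (n - m)"
    using card_Gs[of "{1..m}" "{m + 1..n}"] by simp
  moreover have "card (Gs {1..Suc m} {m + 2..n}) = Cs (Suc m) (n - Suc m)"
    using card_Gs[of "{1..Suc m}" "{m + 2..n}"] by simp
  ultimately show ?thesis by simp
qed

theorem lemma2:
  fixes n k :: nat
  assumes "2 \<le> k" and "k \<le> n"
  shows "f_count n k = card (F_set n (k - 1))"
proof -
  have "card (F_set n (k - 1)) = Cs (k - 1) (n - (k - 1)) - Cs (Suc (k - 1)) (n - Suc (k - 1))"
    using card_F[of "k - 1" n] assms by simp
  moreover have "n - (k - 1) = Suc (n - k)" "Suc (k - 1) = k" using assms by auto
  ultimately show ?thesis using f_count_Cs[OF assms] by simp
qed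

end
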